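(* Let $r>0$, and let $(X_i,x_i,d_i)_{i\in\mathbb{Z}^+}$ be pointed metric spaces. Suppose that for each $i$ the $r$-neighborhood $U_i=\{y\in X_i: d_i(y,x_i)<r\}$ admits a strong deformation contraction $R_i$ to $x_i$, where $U_i$ is equipped with the restricted metric $d_i$. Then for every pointed compact space $(K,k_0)$, the natural continuous bijection $\bigvee_{\mathbb{Z}^+}X_i\to\bigvee^m_{\mathbb{Z}^+}X_i$ induces a bijection between the sets of pointed homotopy classes of pointed maps $[K,\bigvee_{\mathbb{Z}^+}X_i]$ and $[K,\bigvee^m_{\mathbb{Z}^+}X_i]$.
   Context: Let $I=[0,1]$. A strong deformation contraction of a pointed metric space $(X,x_0,d)$ to $x_0$ is a continuous map $H\colon X\times I\to X$ such that: (1) $H(x,0)=x$ for all $x$; (2) $H(X\times\{1\})=H(\{x_0\}\times I)=\{x_0\}$; (3) $d(H(x,t),H(y,t))\le d(x,y)$ for all $x,y\in X$ and all $t\in I$. The weak wedge $\bigvee_{\mathbb{Z}^+}X_i$ is the quotient space of the disjoint union of the $X_i$ obtained by identifying all the points $x_i$. It is based at the wedge point. The metric wedge $\bigvee^m_{\mathbb{Z}^+}X_i$ is the same set, based at the wedge point, with the metric $d_\vee$ given by: - $d_\vee(x,y)=d_j(x,y)$ if $x,y\in X_j$ for some $j$; - $d_\vee(x,y)=d_j(x,x_j)+d_k(y,x_k)$ if $x\in X_j$, $y\in X_k$ with $j\ne k$. *)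

theory Defs
  imports "HOL-Analysis.Analysis"
begin

definition strong_deformation_contraction ::
  "'a metric \<Rightarrow> 'a \<Rightarrow> ('a \<times> real \<Rightarrow> 'a) \<Rightarrow> bool" where
  "strong_deformation_contraction m x0 H \<longleftrightarrow>
     continuous_map (prod_topology (mtopology_of m) (top_of_set {0..1})) (mtopology_of m) H \<and>
     (\<forall>x\<in>mspace m. H (x, 0) = x) \<and>
     H ` (mspace m \<times> {1}) = {x0} \<and>
     H ` ({x0} \<times> {0..1}) = {x0} \<and>
     (\<forall>x\<in>mspace m. \<forall>y\<in>mspace m. \<forall>t\<in>{0..1}. mdist m (H (x, t)) (H (y, t)) \<le> mdist m x y)"

text \<open>Wedge of the family (m i, x0 i), i :: nat.  The wedge point is None; every other
  point of the i-th summand x is Some (i, x).\<close>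
definition wedge_carrier :: "(nat \<Rightarrow> 'a metric) \<Rightarrow> (nat \<Rightarrow> 'a) \<Rightarrow> (nat \<times> 'a) option set" where
  "wedge_carrier m x0 = insert None {Some (i, x) | i x. x \<in> mspace (m i) \<and> x \<noteq> x0 i}"

definition wedge_inj :: "(nat \<Rightarrow> 'a) \<Rightarrow> nat \<Rightarrow> 'a \<Rightarrow> (nat \<times> 'a) option" where
  "wedge_inj x0 i x = (if x = x0 i then None else Some (i, x))"

text \<open>Weak wedge: quotient topology of the disjoint union (a set is open iff its preimage in
  every summand is open).\<close>
definition weak_wedge :: "(nat \<Rightarrow> 'a metric) \<Rightarrow> (nat \<Rightarrow> 'a) \<Rightarrow> (nat \<times> 'a) option topology" where
  "weak_wedge m x0 = topology (\<lambda>U. U \<subseteq> wedge_carrier m x0 \<and>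
      (\<forall>i. openin (mtopology_of (m i)) {x \<in> mspace (m i). wedge_inj x0 i x \<in> U}))"

definition wedge_dist :: "(nat \<Rightarrow> 'a metric) \<Rightarrow> (nat \<Rightarrow> 'a) \<Rightarrow>
    (nat \<times> 'a) option \<Rightarrow> (nat \<times> 'a) option \<Rightarrow> real" where
  "wedge_dist m x0 p q =
     (case (p, q) of
        (None, None) \<Rightarrow> 0
      | (None, Some (k, y)) \<Rightarrow> mdist (m k) (x0 k) y
      | (Some (j, x), None) \<Rightarrow> mdist (m j) x (x0 j)
      | (Some (j, x), Some (k, y)) \<Rightarrow>
          (if j = k then mdist (m j) x y else mdist (m j) x (x0 j) + mdist (m k) y (x0 k)))"

definition metric_wedge :: "(nat \<Rightarrow> 'a metric) \<Rightarrow> (nat \<Rightarrow> 'a) \<Rightarrow> (nat \<times> 'a) option metric" where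
  "metric_wedge m x0 = metric (wedge_carrier m x0, wedge_dist m x0)"

definition pointed_maps :: "'b topology \<Rightarrow> 'b \<Rightarrow> 'c topology \<Rightarrow> 'c \<Rightarrow> ('b \<Rightarrow> 'c) set" where
  "pointed_maps K k0 X x0 = {f. continuous_map K X f \<and> f k0 = x0}"

definition pointed_homotopic :: "'b topology \<Rightarrow> 'b \<Rightarrow> 'c topology \<Rightarrow> 'c \<Rightarrow> ('b \<Rightarrow> 'c) \<Rightarrow> ('b \<Rightarrow> 'c) \<Rightarrow> bool" where
  "pointed_homotopic K k0 X x0 f g = homotopic_with (\<lambda>h. h k0 = x0) K X f g"

definition pointed_homotopy_classes :: "'b topology \<Rightarrow> 'b \<Rightarrow> 'c topology \<Rightarrow> 'c \<Rightarrow> ('b \<Rightarrow> 'c) set set" where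
  "pointed_homotopy_classes K k0 X x0 =
     pointed_maps K k0 X x0 //
       {(f, g). f \<in> pointed_maps K k0 X x0 \<and> g \<in> pointed_maps K k0 X x0 \<and> pointed_homotopic K k0 X x0 f g}"

definition induced_on_classes :: "'b topology \<Rightarrow> 'b \<Rightarrow> 'd topology \<Rightarrow> 'd \<Rightarrow> ('c \<Rightarrow> 'd) \<Rightarrow> ('b \<Rightarrow> 'c) set \<Rightarrow> ('b \<Rightarrow> 'd) set" where
  "induced_on_classes K k0 Y y0 phi C =
     {g \<in> pointed_maps K k0 Y y0. \<exists>f\<in>C. pointed_homotopic K k0 Y y0 (phi \<circ> f) g}"

end

theory Submission
  imports Defs
begin

lemma wd_simps[simp]:
  "wedge_dist m x0 None None = 0"
  "wedge_dist m x0 None (Some (k,y)) = mdist (m k) (x0 k) y"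
  "wedge_dist m x0 (Some (j,x)) None = mdist (m j) x (x0 j)"
  "wedge_dist m x0 (Some (j,x)) (Some (k,y)) = (if j = k then mdist (m j) x y else mdist (m j) x (x0 j) + mdist (m k) y (x0 k))"
  by (auto simp: wedge_dist_def)

lemma in_carrier: "p \<in> wedge_carrier m x0 \<longleftrightarrow> p = None \<or> (\<exists>i x. p = Some (i,x) \<and> x \<in> mspace (m i) \<and> x \<noteq> x0 i)"
  by (auto simp: wedge_carrier_def)

lemma Some_in_carrier[simp]: "Some (i,x) \<in> wedge_carrier m x0 \<longleftrightarrow> x \<in> mspace (m i) \<and> x \<noteq> x0 i"
  by (auto simp: wedge_carrier_def)

lemma None_in_carrier[simp]: "None \<in> wedge_carrier m x0"
  by (auto simp: wedge_carrier_def)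

lemma tri2: "u \<in> mspace m \<Longrightarrow> v \<in> mspace m \<Longrightarrow> w \<in> mspace m \<Longrightarrow> mdist m w z \<le> mdist m v z + mdist m v w \<or> z \<notin> mspace m"
  by (metis mdist_commute mdist_triangle add.commute)
lemma tri1: "v \<in> mspace m \<Longrightarrow> w \<in> mspace m \<Longrightarrow> z \<in> mspace m \<Longrightarrow> mdist m w z \<le> mdist m v z + mdist m v w"
  by (metis mdist_commute mdist_triangle add.commute)
lemma tri3: "u \<in> mspace m \<Longrightarrow> v \<in> mspace m \<Longrightarrow> w \<in> mspace m \<Longrightarrow> mdist m u w \<le> mdist m u v + mdist m w v"
  by (metis mdist_commute mdist_triangle)


lemma LL0: "x0 aa \<in> mspace (m aa) \<Longrightarrow> b \<in> mspace (m aa) \<Longrightarrow> ba \<in> mspace (m aa) \<Longrightarrow> mdist (m aa) ba (x0 aa) \<le> mdist (m aa) b (x0 aa) + mdist (m aa) b ba"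
  by (metis tri1)
lemma LL1: "x0 aa \<in> mspace (m aa) \<Longrightarrow> b \<in> mspace (m aa) \<Longrightarrow> ba \<in> mspace (m aa) \<Longrightarrow> mdist (m aa) b ba \<le> mdist (m aa) b (x0 aa) + mdist (m aa) ba (x0 aa)"
  by (metis tri3)
lemma LL2: "x0 aa \<in> mspace (m aa) \<Longrightarrow> b \<in> mspace (m aa) \<Longrightarrow> ba \<in> mspace (m aa) \<Longrightarrow> mdist (m aa) b (x0 aa) \<le> mdist (m aa) b ba + mdist (m aa) ba (x0 aa)"
  by (metis mdist_triangle)

lemma wd_Metric_space:
  assumes x0: "\<And>i. x0 i \<in> mspace (m i)"
  shows "Metric_space (wedge_carrier m x0) (wedge_dist m x0)"
proof
  fix p q show "0 \<le> wedge_dist m x0 p q"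
    by (auto simp: wedge_dist_def split: option.splits prod.splits)
  show "wedge_dist m x0 p q = wedge_dist m x0 q p"
    by (auto simp: wedge_dist_def mdist_commute split: option.splits prod.splits)
next
  fix p q assume "p \<in> wedge_carrier m x0" "q \<in> wedge_carrier m x0"
  then show "(wedge_dist m x0 p q = 0) = (p = q)"
    using x0 by (auto simp: in_carrier add_nonneg_eq_0_iff split: if_splits)
next
  fix p q s assume pqs: "p \<in> wedge_carrier m x0" "q \<in> wedge_carrier m x0" "s \<in> wedge_carrier m x0"
  then show "wedge_dist m x0 p s \<le> wedge_dist m x0 p q + wedge_dist m x0 q s"
    using x0
    apply (cases p; cases q; cases s)
           apply (auto simp: mdist_commute intro: add_increasing2 add_increasing)
         apply (metis LL0 LL1 LL2 mdist_triangle)+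
    apply (subgoal_tac "mdist (m ab) b bb \<le> mdist (m ab) b (x0 ab) + mdist (m ab) bb (x0 ab)")
     apply (smt (verit) mdist_nonneg)
    apply (metis LL1)
    done
qed


locale WW =
  fixes m :: "nat \<Rightarrow> 'a metric" and x0 :: "nat \<Rightarrow> 'a"
  assumes x0: "\<And>i. x0 i \<in> mspace (m i)"
begin

abbreviation "W \<equiv> metric_wedge m x0"
abbreviation "T \<equiv> weak_wedge m x0"
abbreviation "CC \<equiv> wedge_carrier m x0"
abbreviation "wd \<equiv> wedge_dist m x0"

lemma mspace_W[simp]: "mspace W = CC" and mdist_W[simp]: "mdist W = wd"
  using wd_Metric_space[OF x0] by (simp_all add: metric_wedge_def Metric_space.mspace_metric Metric_space.mdist_metric)

lemma wd_self[simp]: "p \<in> CC \<Longrightarrow> wd p p = 0"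
  using mdist_zero[of p W p] by simp

lemma wedge_inj_in[simp]: "x \<in> mspace (m i) \<Longrightarrow> wedge_inj x0 i x \<in> CC"
  by (auto simp: wedge_inj_def)

lemma wd_inj[simp]: "x \<in> mspace (m i) \<Longrightarrow> y \<in> mspace (m i) \<Longrightarrow> wd (wedge_inj x0 i x) (wedge_inj x0 i y) = mdist (m i) x y"
  using x0[of i] by (auto simp: wedge_inj_def mdist_commute)

lemma wd_None_inj[simp]: "x \<in> mspace (m i) \<Longrightarrow> wd None (wedge_inj x0 i x) = mdist (m i) (x0 i) x"
  using x0[of i] by (auto simp: wedge_inj_def)

lemma cont_inj: "continuous_map (mtopology_of (m i)) (mtopology_of W) (wedge_inj x0 i)"
  apply (rule Lipschitz_continuous_imp_continuous_map)
  unfolding Lipschitz_continuous_map_def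
  apply (rule conjI)
   apply (simp add: Pi_iff)
  apply (rule exI[of _ 1])
  apply simp
  done

lemma istop: "istopology (\<lambda>U. U \<subseteq> CC \<and> (\<forall>i. openin (mtopology_of (m i)) {x \<in> mspace (m i). wedge_inj x0 i x \<in> U}))"
  unfolding istopology_def
proof (rule conjI; intro allI impI)
  fix S U assume that: "S \<subseteq> CC \<and> (\<forall>i. openin (mtopology_of (m i)) {x \<in> mspace (m i). wedge_inj x0 i x \<in> S})"
    "U \<subseteq> CC \<and> (\<forall>i. openin (mtopology_of (m i)) {x \<in> mspace (m i). wedge_inj x0 i x \<in> U})"
  show "S \<inter> U \<subseteq> CC \<and> (\<forall>i. openin (mtopology_of (m i)) {x \<in> mspace (m i). wedge_inj x0 i x \<in> S \<inter> U})"
  proof -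
    have eq: "{x \<in> mspace (m i). wedge_inj x0 i x \<in> S \<inter> U} = {x \<in> mspace (m i). wedge_inj x0 i x \<in> S} \<inter> {x \<in> mspace (m i). wedge_inj x0 i x \<in> U}" for i
      by auto
    have "openin (mtopology_of (m i)) ({x \<in> mspace (m i). wedge_inj x0 i x \<in> S} \<inter> {x \<in> mspace (m i). wedge_inj x0 i x \<in> U})" for i
      using that by (intro openin_Int) auto
    then show ?thesis using that eq by auto
  qed
next
  fix K assume K: "\<forall>S\<in>K. S \<subseteq> CC \<and> (\<forall>i. openin (mtopology_of (m i)) {x \<in> mspace (m i). wedge_inj x0 i x \<in> S})"
  show "\<Union> K \<subseteq> CC \<and> (\<forall>i. openin (mtopology_of (m i)) {x \<in> mspace (m i). wedge_inj x0 i x \<in> \<Union> K})"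
  proof (intro conjI allI)
    show "\<Union> K \<subseteq> CC" using K by blast
    fix i
    have "{x \<in> mspace (m i). wedge_inj x0 i x \<in> \<Union> K} = \<Union> ((\<lambda>S. {x \<in> mspace (m i). wedge_inj x0 i x \<in> S}) ` K)"
      by auto
    moreover have "openin (mtopology_of (m i)) (\<Union> ((\<lambda>S. {x \<in> mspace (m i). wedge_inj x0 i x \<in> S}) ` K))"
      using K by (intro openin_Union) auto
    ultimately show "openin (mtopology_of (m i)) {x \<in> mspace (m i). wedge_inj x0 i x \<in> \<Union> K}"
      by simp
  qed
qed

lemma openin_T: "openin T U \<longleftrightarrow> U \<subseteq> CC \<and> (\<forall>i. openin (mtopology_of (m i)) {x \<in> mspace (m i). wedge_inj x0 i x \<in> U})"
  unfolding weak_wedge_def using istop by simp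

lemma topspace_T[simp]: "topspace T = CC"
proof -
  have "openin T CC"
  proof -
    have "{x \<in> mspace (m i). wedge_inj x0 i x \<in> CC} = mspace (m i)" for i by auto
    moreover have "openin (mtopology_of (m i)) (mspace (m i))" for i
      using openin_topspace[of "mtopology_of (m i)"] by simp
    ultimately show ?thesis unfolding openin_T by simp
  qed
  moreover have "\<And>U. openin T U \<Longrightarrow> U \<subseteq> CC" using openin_T by blast
  ultimately show ?thesis
    using openin_subset[of T CC] openin_topspace[of T] by blast
qed

lemma cont_id: "continuous_map T (mtopology_of W) id"
  unfolding continuous_map_def
proof (intro conjI allI impI)
  show "id \<in> topspace T \<rightarrow> topspace (mtopology_of W)" by auto
  fix U assume U: "openin (mtopology_of W) U"
  have "U \<subseteq> CC" using openin_subset[OF U] by simp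
  moreover have "openin (mtopology_of (m i)) {x \<in> mspace (m i). wedge_inj x0 i x \<in> U}" for i
    using openin_continuous_map_preimage[OF cont_inj U] by simp
  ultimately show "openin T {x \<in> topspace T. id x \<in> U}"
    unfolding openin_T by (auto simp: Int_absorb1 cong: conj_cong)
qed

end

lemma mdist_self[simp]: "x \<in> mspace mm \<Longrightarrow> mdist mm x x = 0"
  by simp

lemma openin_mtop_of: "openin (mtopology_of mm) U \<longleftrightarrow> U \<subseteq> mspace mm \<and> (\<forall>x\<in>U. \<exists>e>0. mball_of mm x e \<subseteq> U)"
  by (simp add: mtopology_of_def mball_of_def Metric_space.openin_mtopology Ball_def)

lemma openin_mball_of: "openin (mtopology_of mm) (mball_of mm x e)"
  by (simp add: mtopology_of_def mball_of_def Metric_space.openin_mball)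

lemma cont_to_metric_of: "continuous_map X (mtopology_of mm) f \<longleftrightarrow>
    (\<forall>x\<in>topspace X. \<forall>e>0. \<exists>U. openin X U \<and> x \<in> U \<and> (\<forall>y\<in>U. f y \<in> mball_of mm (f x) e))"
  by (simp add: mtopology_of_def mball_of_def Metric_space.continuous_map_to_metric)

lemma t1_mtop_of: "t1_space (mtopology_of mm)"
  by (simp add: mtopology_of_def Metric_space.Hausdorff_space_mtopology Hausdorff_imp_t1_space)

context WW begin

lemma wd_same_summand:
  assumes "Some (j,x) \<in> CC" "q \<in> CC" "wd (Some (j,x)) q < mdist (m j) x (x0 j)"
  shows "\<exists>y. q = Some (j,y) \<and> wd (Some (j,x)) q = mdist (m j) x y"
  using assms by (cases q) (auto split: if_splits dest: order.strict_trans1[OF mdist_nonneg])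

lemma local_nbhd:
  assumes U: "openin T U" and p: "p \<in> U" and N: "finite N"
  shows "\<exists>e>0. \<forall>q\<in>CC. (\<forall>i x. q = Some (i,x) \<longrightarrow> i \<in> N) \<and> wd p q < e \<longrightarrow> q \<in> U"
proof (cases p)
  case None
  have O: "openin (mtopology_of (m i)) {x \<in> mspace (m i). wedge_inj x0 i x \<in> U}" for i
    using U by (simp add: openin_T)
  have "x0 i \<in> {x \<in> mspace (m i). wedge_inj x0 i x \<in> U}" for i
    using p None x0 by (simp add: wedge_inj_def)
  then have "\<forall>i. \<exists>e>0. mball_of (m i) (x0 i) e \<subseteq> {x \<in> mspace (m i). wedge_inj x0 i x \<in> U}"
    using O[unfolded openin_mtop_of] by blast
  then have "\<exists>e. \<forall>i. e i > 0 \<and> mball_of (m i) (x0 i) (e i) \<subseteq> {x \<in> mspace (m i). wedge_inj x0 i x \<in> U}"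
    by (rule choice)
  then obtain e where e: "\<And>i. e i > 0" "\<And>i. mball_of (m i) (x0 i) (e i) \<subseteq> {x \<in> mspace (m i). wedge_inj x0 i x \<in> U}"
    by blast
  define \<epsilon> where "\<epsilon> = Min (insert 1 (e ` N))"
  have "\<epsilon> > 0" unfolding \<epsilon>_def using N e by (simp add: Min_gr_iff)
  moreover have eps_le: "\<epsilon> \<le> e i" if "i \<in> N" for i unfolding \<epsilon>_def using N that by (simp add: Min_le_iff)
  moreover
  have "q \<in> U" if "q \<in> CC" "\<forall>i x. q = Some (i,x) \<longrightarrow> i \<in> N" "wd p q < \<epsilon>" for q
  proof (cases q)
    case None then show ?thesis using p \<open>p = None\<close> by simp
  next
    case (Some a)
    then obtain i x where a: "q = Some (i,x)" by (cases a) auto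
    with that have "i \<in> N" "x \<in> mspace (m i)" "x \<noteq> x0 i" by auto
    moreover have "mdist (m i) (x0 i) x < e i"
      using that a \<open>p = None\<close> eps_le[OF \<open>i \<in> N\<close>] by simp
    ultimately have "x \<in> {x \<in> mspace (m i). wedge_inj x0 i x \<in> U}"
      using e(2)[of i] x0[of i] by auto
    then show ?thesis using a \<open>x \<noteq> x0 i\<close> by (simp add: wedge_inj_def)
  qed
  ultimately show ?thesis by blast
next
  case (Some a)
  then obtain j x where a: "p = Some (j,x)" by (cases a) auto
  have pC: "p \<in> CC" using U p by (auto simp: openin_T)
  then have xj: "x \<in> mspace (m j)" "x \<noteq> x0 j" using a by auto
  have O: "openin (mtopology_of (m j)) {x \<in> mspace (m j). wedge_inj x0 j x \<in> U}"
    using U by (simp add: openin_T)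
  have "x \<in> {x \<in> mspace (m j). wedge_inj x0 j x \<in> U}"
    using p a xj by (simp add: wedge_inj_def)
  then obtain e where e: "e > 0" "mball_of (m j) x e \<subseteq> {x \<in> mspace (m j). wedge_inj x0 j x \<in> U}"
    using O[unfolded openin_mtop_of] by blast
  define \<epsilon> where "\<epsilon> = min e (mdist (m j) x (x0 j))"
  have "mdist (m j) x (x0 j) \<noteq> 0" using xj x0[of j] by simp
  then have "mdist (m j) x (x0 j) > 0" by (simp add: less_le)
  then have "\<epsilon> > 0" unfolding \<epsilon>_def using e by simp
  moreover have "q \<in> U" if "q \<in> CC" "wd p q < \<epsilon>" for q
  proof -
    have "wd p q < mdist (m j) x (x0 j)" using that(2) unfolding \<epsilon>_def by simp
    then have "\<exists>y. q = Some (j,y) \<and> wd p q = mdist (m j) x y"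
      using wd_same_summand[of j x q] that(1) pC a by simp
    then obtain y where y: "q = Some (j,y)" "wd p q = mdist (m j) x y" by blast
    then have "y \<in> mball_of (m j) x e" using that xj unfolding \<epsilon>_def by auto
    then have "wedge_inj x0 j y \<in> U" using e by auto
    moreover have "y \<noteq> x0 j" using that y by auto
    ultimately show ?thesis using y by (simp add: wedge_inj_def)
  qed
  ultimately show ?thesis by blast
qed

lemma cont_to_T:
  assumes g: "continuous_map Z (mtopology_of W) g" and N: "finite N"
    and gN: "\<And>z i x. z \<in> topspace Z \<Longrightarrow> g z = Some (i,x) \<Longrightarrow> i \<in> N"
  shows "continuous_map Z T g"
  unfolding continuous_map_def
proof (intro conjI allI impI)
  show "g \<in> topspace Z \<rightarrow> topspace T"
    using continuous_map_funspace[OF g] by simp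
  fix U assume U: "openin T U"
  show "openin Z {z \<in> topspace Z. g z \<in> U}"
  proof (subst openin_subopen, intro ballI)
    fix z assume z: "z \<in> {z \<in> topspace Z. g z \<in> U}"
    then obtain e where e: "e > 0" "\<And>q. q\<in>CC \<Longrightarrow> (\<forall>i x. q = Some (i,x) \<longrightarrow> i \<in> N) \<Longrightarrow> wd (g z) q < e \<Longrightarrow> q \<in> U"
      using local_nbhd[OF U _ N, of "g z"] by auto
    define V where "V = {y \<in> topspace Z. g y \<in> mball_of W (g z) e}"
    have "openin Z V" unfolding V_def
      by (rule openin_continuous_map_preimage[OF g openin_mball_of])
    moreover have "z \<in> V" unfolding V_def using z e continuous_map_funspace[OF g] by (auto simp: Pi_iff)
    moreover have "V \<subseteq> {z \<in> topspace Z. g z \<in> U}"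
    proof
      fix y assume "y \<in> V"
      then have "y \<in> topspace Z" "g y \<in> CC" "wd (g z) (g y) < e" unfolding V_def by auto
      then show "y \<in> {z \<in> topspace Z. g z \<in> U}" using e(2)[of "g y"] gN[of y] by auto
    qed
    ultimately show "\<exists>T. openin Z T \<and> z \<in> T \<and> T \<subseteq> {z \<in> topspace Z. g z \<in> U}" by blast
  qed
qed

lemma far_finite:
  assumes S: "compactin (mtopology_of W) S" and r: "r > 0"
  shows "finite {i. \<exists>x. Some (i,x) \<in> S \<and> x \<notin> mball_of (m i) (x0 i) r}" (is "finite ?I")
proof -
  have SC: "S \<subseteq> CC" using compactin_subset_topspace[OF S] by simp
  have cov: "S \<subseteq> \<Union> ((\<lambda>c. mball_of W c r) ` S)"
  proof
    fix x assume "x \<in> S"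
    then have "x \<in> CC" using SC by auto
    then have "wd x x = 0" using mdist_zero[of x W x] by simp
    then show "x \<in> \<Union> ((\<lambda>c. mball_of W c r) ` S)" using \<open>x \<in> S\<close> \<open>x \<in> CC\<close> r by auto
  qed
  have cp: "\<And>U. (\<forall>V\<in>U. openin (mtopology_of W) V) \<Longrightarrow> S \<subseteq> \<Union>U \<Longrightarrow> \<exists>F. finite F \<and> F \<subseteq> U \<and> S \<subseteq> \<Union>F"
    using S by (simp add: compactin_def)
  have opn: "\<forall>V\<in>(\<lambda>c. mball_of W c r) ` S. openin (mtopology_of W) V"
    by (simp add: openin_mball_of)
  obtain F where F: "finite F" "F \<subseteq> (\<lambda>c. mball_of W c r) ` S" "S \<subseteq> \<Union>F"
    using cp[OF opn cov] by blast
  have ex1: "\<forall>i\<in>?I. \<exists>x. Some (i,x) \<in> S \<and> x \<notin> mball_of (m i) (x0 i) r"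
    by blast
  obtain xx where xx: "\<forall>i\<in>?I. Some (i,xx i) \<in> S \<and> xx i \<notin> mball_of (m i) (x0 i) r"
    using bchoice[OF ex1] by blast
  then have ex2: "\<forall>i\<in>?I. \<exists>b. b \<in> F \<and> Some (i,xx i) \<in> b"
    using F(3) by blast
  obtain bb where bb: "\<forall>i\<in>?I. bb i \<in> F \<and> Some (i,xx i) \<in> bb i"
    using bchoice[OF ex2] by blast
  have xb: "\<And>i. i \<in> ?I \<Longrightarrow> Some (i,xx i) \<in> S \<and> xx i \<notin> mball_of (m i) (x0 i) r \<and> bb i \<in> F \<and> Some (i,xx i) \<in> bb i"
    using xx bb by blast
  have inj: "inj_on bb ?I"
  proof (rule inj_onI, rule ccontr)
    fix i j assume ij: "i \<in> ?I" "j \<in> ?I" "bb i = bb j" "i \<noteq> j"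
    obtain c where c: "c \<in> S" "bb i = mball_of W c r" using F(2) xb[OF ij(1)] by blast
    have pi: "Some (i, xx i) \<in> CC" "Some (j, xx j) \<in> CC" using xb[OF ij(1)] xb[OF ij(2)] SC by auto
    have "wd c (Some (i, xx i)) < r" "wd c (Some (j, xx j)) < r" using xb[OF ij(1)] xb[OF ij(2)] c ij(3) by auto
    moreover have "mdist W (Some (i, xx i)) (Some (j, xx j)) \<le> mdist W (Some (i, xx i)) c + mdist W c (Some (j, xx j))"
      using pi c SC by (intro mdist_triangle) auto
    moreover have "mdist W (Some (i, xx i)) c = mdist W c (Some (i, xx i))" by (rule mdist_commute)
    ultimately have "wd (Some (i, xx i)) (Some (j, xx j)) < 2*r" by simp
    moreover have "mdist (m i) (xx i) (x0 i) \<ge> r" "mdist (m j) (xx j) (x0 j) \<ge> r"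
      using xb[OF ij(1)] xb[OF ij(2)] pi x0 by (auto simp: mdist_commute)
    ultimately show False using ij(4) by simp
  qed
  have "bb ` ?I \<subseteq> F" using xb by auto
  then have "finite (bb ` ?I)" using F(1) by (rule finite_subset)
  then show ?thesis using inj by (rule finite_imageD)
qed

lemma T_compact_finite:
  assumes S: "compactin T S"
  shows "finite {i. \<exists>x. Some (i,x) \<in> S}" (is "finite ?I")
proof -
  have SC: "S \<subseteq> CC" using compactin_subset_topspace[OF S] by simp
  have ex1: "\<forall>i\<in>?I. \<exists>x. Some (i, x) \<in> S" by blast
  obtain xx where xx0: "\<forall>i\<in>?I. Some (i, xx i) \<in> S" using bchoice[OF ex1] by blast
  then have xx: "\<And>i. i \<in> ?I \<Longrightarrow> Some (i, xx i) \<in> S" by blast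
  define D where "D = (\<lambda>i. Some (i, xx i)) ` ?I"
  have DS: "D \<subseteq> S" using xx D_def by auto
  have opn: "openin T (CC - A)" if A: "A \<subseteq> D" for A
    unfolding openin_T
  proof (intro conjI allI)
    fix i
    define E where "E = {x. Some (i,x) \<in> A}"
    have "E \<subseteq> {xx i}" using A unfolding E_def D_def by auto
    then have Ef: "finite E" using finite_subset by blast
    have AC: "Some (i,x) \<in> CC" if "Some (i,x) \<in> A" for x using A DS SC that by blast
    have EM: "E \<subseteq> mspace (m i)" unfolding E_def using AC by auto
    have "None \<notin> A" using A D_def by auto
    then have "{x \<in> mspace (m i). wedge_inj x0 i x \<in> CC - A} = mspace (m i) - E"
      unfolding E_def wedge_inj_def using AC by auto
    moreover have "closedin (mtopology_of (m i)) E"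
      using t1_mtop_of[unfolded t1_space_closedin_finite] Ef EM by auto
    then have "openin (mtopology_of (m i)) (topspace (mtopology_of (m i)) - E)"
      by (intro openin_diff openin_topspace)
    ultimately show "openin (mtopology_of (m i)) {x \<in> mspace (m i). wedge_inj x0 i x \<in> CC - A}"
      by simp
  qed auto
  define \<U> where "\<U> = insert (CC - D) ((\<lambda>d. CC - (D - {d})) ` D)"
  have o1: "\<forall>U\<in>\<U>. openin T U" unfolding \<U>_def using opn by auto
  have o2: "S \<subseteq> \<Union>\<U>" unfolding \<U>_def using SC by blast
  have cp: "\<And>U. (\<forall>V\<in>U. openin T V) \<Longrightarrow> S \<subseteq> \<Union>U \<Longrightarrow> \<exists>F. finite F \<and> F \<subseteq> U \<and> S \<subseteq> \<Union>F"
    using S by (simp add: compactin_def)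
  obtain F where F: "finite F" "F \<subseteq> \<U>" "S \<subseteq> \<Union>F"
    using cp[OF o1 o2] by blast
  have "D \<subseteq> (\<Union>V\<in>F. V \<inter> D)" using F DS by blast
  moreover have "finite (V \<inter> D)" if "V \<in> F" for V
  proof -
    have "\<exists>d. V \<inter> D \<subseteq> {d}" using F(2) that unfolding \<U>_def by blast
    then obtain d where "V \<inter> D \<subseteq> {d}" by blast
    then show ?thesis by (rule finite_subset) simp
  qed
  ultimately have "finite D" using F(1) by (meson finite_UN_I finite_subset)
  moreover have "inj_on (\<lambda>i. Some (i, xx i)) ?I" by (auto intro: inj_onI)
  ultimately show ?thesis unfolding D_def using finite_imageD by blast
qed

end


locale WWR = WW +
  fixes r :: real and R :: "nat \<Rightarrow> 'a \<times> real \<Rightarrow> 'a"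
  assumes r: "r > 0"
    and sdc: "\<And>i. strong_deformation_contraction (submetric (m i) (mball_of (m i) (x0 i) r)) (x0 i) (R i)"
begin

abbreviation "B i \<equiv> mball_of (m i) (x0 i) r"

lemma B_sub: "B i \<subseteq> mspace (m i)" by auto

lemma x0_B: "x0 i \<in> B i" using x0[of i] r by simp

lemma Bint[simp]: "B i \<inter> mspace (m i) = B i"
  using B_sub by auto

lemma msub[simp]: "mspace (submetric (m i) (B i)) = B i"
  using B_sub by auto

lemma R_cont: "continuous_map (prod_topology (mtopology_of (submetric (m i) (B i))) (top_of_set {0..1})) (mtopology_of (submetric (m i) (B i))) (R i)"
  using sdc[of i] unfolding strong_deformation_contraction_def by blast

lemma R_in: "x \<in> B i \<Longrightarrow> t \<in> {0..1} \<Longrightarrow> R i (x,t) \<in> B i"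
  using continuous_map_funspace[OF R_cont[of i]] by (auto simp: Pi_iff)

lemma R_in': "x \<in> B i \<Longrightarrow> t \<in> {0..1} \<Longrightarrow> R i (x,t) \<in> mspace (m i)"
  using R_in B_sub by blast

lemma R0: "x \<in> B i \<Longrightarrow> R i (x,0) = x"
  using sdc[of i] unfolding strong_deformation_contraction_def by simp

lemma R1: assumes "x \<in> B i" shows "R i (x,1) = x0 i"
proof -
  have "R i (x,1) \<in> R i ` (B i \<times> {1})" using assms by auto
  then show ?thesis using sdc[of i] unfolding strong_deformation_contraction_def by simp
qed

lemma Rfix: assumes "t \<in> {0..1}" shows "R i (x0 i,t) = x0 i"
proof -
  have "R i (x0 i,t) \<in> R i ` ({x0 i} \<times> {0..1})" using assms by auto
  then show ?thesis using sdc[of i] unfolding strong_deformation_contraction_def by simp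
qed

lemma Rlip: "x \<in> B i \<Longrightarrow> y \<in> B i \<Longrightarrow> t \<in> {0..1} \<Longrightarrow> mdist (m i) (R i (x,t)) (R i (y,t)) \<le> mdist (m i) x y"
  using sdc[of i] unfolding strong_deformation_contraction_def by simp

lemma R_tcont: assumes "x \<in> B i"
  shows "continuous_map (top_of_set {0..1}) (mtopology_of (m i)) (\<lambda>t. R i (x,t))"
proof -
  have "continuous_map (top_of_set {0..1}) (prod_topology (mtopology_of (submetric (m i) (B i))) (top_of_set {0..1})) (\<lambda>t. (x,t))"
    using assms by (intro continuous_map_pairedI) auto
  from continuous_map_compose[OF this R_cont[of i]]
  have "continuous_map (top_of_set {0..1}) (subtopology (mtopology_of (m i)) (B i)) (\<lambda>t. R i (x,t))"
    by (simp add: o_def mtopology_of_submetric)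
  then show ?thesis by (rule continuous_map_into_fulltopology)
qed

definition Psi :: "nat set \<Rightarrow> real \<Rightarrow> (nat \<times> 'a) option \<Rightarrow> (nat \<times> 'a) option" where
  "Psi N t p = (case p of None \<Rightarrow> None
     | Some (i,x) \<Rightarrow> if i \<in> N \<or> x \<notin> B i then Some (i,x) else wedge_inj x0 i (R i (x,t)))"

lemma Psi_None[simp]: "Psi N t None = None"
  by (simp add: Psi_def)

lemma Psi_Some: "Psi N t (Some (i,x)) = (if i \<in> N \<or> x \<notin> B i then Some (i,x) else wedge_inj x0 i (R i (x,t)))"
  by (simp add: Psi_def)

lemma Psi_in: assumes "p \<in> CC" "t \<in> {0..1}" shows "Psi N t p \<in> CC"
  using assms R_in' by (cases p) (auto simp: Psi_def)

lemma Psi_0: assumes "p \<in> CC" shows "Psi N 0 p = p"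
  using assms R0 by (cases p) (auto simp: Psi_def wedge_inj_def)

lemma Psi_1: assumes "Psi N 1 p = Some (i,x)" shows "i \<in> N \<or> x \<notin> B i"
  using assms R1 by (cases p) (auto simp: Psi_def wedge_inj_def split: if_splits)

lemma Psi_fixN: assumes "\<forall>i x. p = Some (i,x) \<longrightarrow> i \<in> N" shows "Psi N t p = p"
  using assms by (cases p) (auto simp: Psi_def)

lemma Psi_norm: assumes p: "p \<in> CC" and t: "t \<in> {0..1}" shows "wd None (Psi N t p) \<le> wd None p"
proof (cases p)
  case (Some a)
  then obtain i x where a: "p = Some (i,x)" by (cases a) auto
  show ?thesis
  proof (cases "i \<in> N \<or> x \<notin> B i")
    case True then show ?thesis using a by (simp add: Psi_Some)
  next
    case False
    then have xB: "x \<in> B i" by simp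
    have "wd None (Psi N t p) = mdist (m i) (x0 i) (R i (x,t))"
      using a False R_in'[OF xB t] by (simp add: Psi_Some)
    also have "\<dots> = mdist (m i) (R i (x0 i,t)) (R i (x,t))" using Rfix[OF t] by simp
    also have "\<dots> \<le> mdist (m i) (x0 i) x" using Rlip[OF x0_B xB t] .
    finally show ?thesis using a by simp
  qed
qed simp

lemma Psi_cont:
  assumes g: "continuous_map Z (mtopology_of W) g"
    and tau: "continuous_map Z (top_of_set {0..1}) \<tau>"
    and S: "\<And>z i x. z \<in> topspace Z \<Longrightarrow> g z = Some (i,x) \<Longrightarrow> i \<notin> N \<Longrightarrow> x \<in> B i"
  shows "continuous_map Z (mtopology_of W) (\<lambda>z. Psi N (\<tau> z) (g z))"
  unfolding cont_to_metric_of
proof (intro ballI allI impI)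
  fix z and e :: real assume z: "z \<in> topspace Z" and e: "e > 0"
  have gC: "\<And>y. y \<in> topspace Z \<Longrightarrow> g y \<in> CC"
    using continuous_map_funspace[OF g] by (auto simp: Pi_iff)
  have tI: "\<And>y. y \<in> topspace Z \<Longrightarrow> \<tau> y \<in> {0..1}"
    using continuous_map_funspace[OF tau] by (auto simp: Pi_iff)
  have PC: "\<And>y. y \<in> topspace Z \<Longrightarrow> Psi N (\<tau> y) (g y) \<in> CC"
    using gC tI Psi_in by blast
  define gpre where "gpre \<epsilon> = {y \<in> topspace Z. g y \<in> mball_of W (g z) \<epsilon>}" for \<epsilon>
  have gpre_open: "openin Z (gpre \<epsilon>)" for \<epsilon>
    unfolding gpre_def by (rule openin_continuous_map_preimage[OF g openin_mball_of])
  have gpre_z: "z \<in> gpre \<epsilon>" if "\<epsilon> > 0" for \<epsilon>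
    unfolding gpre_def using z gC[OF z] that by simp
  have gpre_D: "y \<in> topspace Z \<and> wd (g z) (g y) < \<epsilon>" if "y \<in> gpre \<epsilon>" for y \<epsilon>
    using that unfolding gpre_def by simp
  show "\<exists>U. openin Z U \<and> z \<in> U \<and> (\<forall>y\<in>U. Psi N (\<tau> y) (g y) \<in> mball_of W (Psi N (\<tau> z) (g z)) e)"
  proof (cases "g z")
    case None
    have "Psi N (\<tau> y) (g y) \<in> mball_of W (Psi N (\<tau> z) (g z)) e" if "y \<in> gpre e" for y
    proof -
      have y: "y \<in> topspace Z" "wd None (g y) < e" using gpre_D[OF that] None by auto
      have "wd None (Psi N (\<tau> y) (g y)) \<le> wd None (g y)"
        using Psi_norm[OF gC tI] y by blast
      then show ?thesis using y PC[OF y(1)] None by simp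
    qed
    then show ?thesis using gpre_open gpre_z e by blast
  next
    case (Some a)
    then obtain j x where a: "g z = Some (j,x)" by (cases a) auto
    have xj: "x \<in> mspace (m j)" "x \<noteq> x0 j" using gC[OF z] a by auto
    have "mdist (m j) x (x0 j) \<noteq> 0" using xj x0[of j] by simp
    then have \<delta>: "mdist (m j) x (x0 j) > 0" by (simp add: less_le)
    define \<delta> where "\<delta> = mdist (m j) x (x0 j)"
    have same: "\<exists>x'. g y = Some (j,x') \<and> wd (g z) (g y) = mdist (m j) x x'"
      if "y \<in> topspace Z" "wd (g z) (g y) < \<delta>" for y
      using wd_same_summand[of j x "g y"] gC[OF z] gC[OF that(1)] that(2) a unfolding \<delta>_def by simp
    show ?thesis
    proof (cases "j \<in> N")
      case True
      have "Psi N (\<tau> y) (g y) \<in> mball_of W (Psi N (\<tau> z) (g z)) e" if "y \<in> gpre (min e \<delta>)" for y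
      proof -
        have y: "y \<in> topspace Z" "wd (g z) (g y) < min e \<delta>" using gpre_D[OF that] by auto
        have "wd (g z) (g y) < \<delta>" using y(2) by simp
        then obtain x' where x': "g y = Some (j,x')" using same[OF y(1)] by blast
        have "Psi N (\<tau> y) (g y) = g y" "Psi N (\<tau> z) (g z) = g z"
          using x' a True by (auto simp: Psi_Some)
        then show ?thesis using y gC[OF y(1)] gC[OF z] by simp
      qed
      moreover have "min e \<delta> > 0" using e \<delta> \<delta>_def by simp
      ultimately show ?thesis using gpre_open gpre_z by blast
    next
      case False
      have xB: "x \<in> B j" using S[OF z a False] .
      define t0 where "t0 = \<tau> z"
      have t0: "t0 \<in> {0..1}" using tI[OF z] t0_def by simp
      have ct: "continuous_map Z (mtopology_of (m j)) (\<lambda>y. R j (x, \<tau> y))"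
        using continuous_map_compose[OF tau R_tcont[OF xB]] by (simp add: o_def)
      define U2 where "U2 = {y \<in> topspace Z. R j (x, \<tau> y) \<in> mball_of (m j) (R j (x,t0)) (e/2)}"
      have U2o: "openin Z U2" unfolding U2_def by (rule openin_continuous_map_preimage[OF ct openin_mball_of])
      have U2z: "z \<in> U2" unfolding U2_def t0_def using z e R_in'[OF xB tI[OF z]] by simp
      have mp: "Psi N (\<tau> y) (g y) \<in> mball_of W (Psi N (\<tau> z) (g z)) e" if "y \<in> gpre (min (e/2) \<delta>) \<inter> U2" for y
      proof -
        have y: "y \<in> topspace Z" "wd (g z) (g y) < min (e/2) \<delta>" using gpre_D[of y "min (e/2) \<delta>"] that by auto
        have "wd (g z) (g y) < \<delta>" using y(2) by simp
        then obtain x' where x': "g y = Some (j,x')" "wd (g z) (g y) = mdist (m j) x x'" using same[OF y(1)] by blast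
        have x'B: "x' \<in> B j" using S[OF y(1) x'(1) False] .
        have ty: "\<tau> y \<in> {0..1}" using tI[OF y(1)] .
        have e1: "Psi N (\<tau> y) (g y) = wedge_inj x0 j (R j (x', \<tau> y))" using x' False x'B by (simp add: Psi_Some)
        have e2: "Psi N (\<tau> z) (g z) = wedge_inj x0 j (R j (x, t0))" using a False xB t0_def by (simp add: Psi_Some)
        have "mdist (m j) (R j (x,t0)) (R j (x', \<tau> y)) \<le> mdist (m j) (R j (x,t0)) (R j (x, \<tau> y)) + mdist (m j) (R j (x, \<tau> y)) (R j (x', \<tau> y))"
          using R_in'[OF xB t0] R_in'[OF xB ty] R_in'[OF x'B ty] by (rule mdist_triangle)
        also have "\<dots> < e/2 + e/2"
        proof (rule add_less_le_mono)
          show "mdist (m j) (R j (x,t0)) (R j (x, \<tau> y)) < e/2" using that unfolding U2_def by simp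
          have "mdist (m j) (R j (x, \<tau> y)) (R j (x', \<tau> y)) \<le> mdist (m j) x x'" using Rlip[OF xB x'B ty] .
          also have "\<dots> \<le> e/2" using y x' by simp
          finally show "mdist (m j) (R j (x, \<tau> y)) (R j (x', \<tau> y)) \<le> e/2" .
        qed
        finally have "mdist (m j) (R j (x,t0)) (R j (x', \<tau> y)) < e" by simp
        then show ?thesis using e1 e2 R_in'[OF xB t0] R_in'[OF x'B ty] by simp
      qed
      have "min (e/2) \<delta> > 0" using e \<delta> \<delta>_def by simp
      then have "z \<in> gpre (min (e/2) \<delta>) \<inter> U2" using gpre_z U2z by blast
      moreover have "openin Z (gpre (min (e/2) \<delta>) \<inter> U2)" using gpre_open U2o by (rule openin_Int)
      ultimately show ?thesis using mp by blast
    qed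
  qed
qed

lemma Psi_1N:
  assumes "p \<in> CC" "\<And>i x. p = Some (i,x) \<Longrightarrow> i \<notin> N \<Longrightarrow> x \<in> B i" "Psi N 1 p = Some (i,x)"
  shows "i \<in> N"
  using assms R1
  apply (cases p)
   apply (auto simp: Psi_def wedge_inj_def split: if_splits)
   apply blast+
  done

lemma surj_lemma:
  assumes K: "compact_space K" and k0: "k0 \<in> topspace K"
    and f: "f \<in> pointed_maps K k0 (mtopology_of W) None"
  shows "\<exists>g \<in> pointed_maps K k0 T None. pointed_homotopic K k0 (mtopology_of W) None f g"
proof -
  have fc: "continuous_map K (mtopology_of W) f" and fk0: "f k0 = None"
    using f by (auto simp: pointed_maps_def)
  have cpt: "compactin (mtopology_of W) (f ` topspace K)"
    using image_compactin[OF K[unfolded compact_space_def] fc] .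
  define N where "N = {i. \<exists>x. Some (i,x) \<in> f ` topspace K \<and> x \<notin> B i}"
  have N: "finite N" unfolding N_def using far_finite[OF cpt r] .
  have fC: "\<And>k. k \<in> topspace K \<Longrightarrow> f k \<in> CC"
    using continuous_map_funspace[OF fc] by (auto simp: Pi_iff)
  have SN: "x \<in> B i" if "k \<in> topspace K" "f k = Some (i,x)" "i \<notin> N" for k i x
  proof (rule ccontr)
    assume "x \<notin> B i"
    moreover have "Some (i,x) \<in> f ` topspace K" using that(1,2) by (intro image_eqI[where x=k]) auto
    ultimately have "i \<in> N" unfolding N_def by blast
    then show False using that(3) by blast
  qed
  define g where "g = (\<lambda>k. Psi N 1 (f k))"
  have c1: "continuous_map K (top_of_set {0..1}) (\<lambda>k. 1::real)" by simp
  have gW: "continuous_map K (mtopology_of W) g"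
    using Psi_cont[OF fc c1 SN] unfolding g_def by simp
  have gT: "continuous_map K T g"
  proof (rule cont_to_T[OF gW N])
    fix k i x assume k: "k \<in> topspace K" and gk: "g k = Some (i,x)"
    show "i \<in> N"
    proof (rule Psi_1N[where p="f k"])
      show "f k \<in> CC" by (rule fC[OF k])
      show "\<And>i x. f k = Some (i,x) \<Longrightarrow> i \<notin> N \<Longrightarrow> x \<in> B i" by (rule SN[OF k])
      show "Psi N 1 (f k) = Some (i,x)" using gk by (simp add: g_def)
    qed
  qed
  have gk0: "g k0 = None" unfolding g_def using fk0 by simp
  define h where "h = (\<lambda>(t,k). if k \<in> topspace K then Psi N t (f k) else if t = 0 then f k else g k)"
  have hc0: "continuous_map (prod_topology (top_of_set {0..1}) K) (mtopology_of W) (\<lambda>z. Psi N (fst z) ((f \<circ> snd) z))"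
  proof (rule Psi_cont)
    show "continuous_map (prod_topology (top_of_set {0..1}) K) (mtopology_of W) (f \<circ> snd)"
      by (rule continuous_map_compose[OF continuous_map_snd fc])
    show "continuous_map (prod_topology (top_of_set {0..1}) K) (top_of_set {0..1}) fst"
      by (rule continuous_map_fst)
    fix z i x assume "z \<in> topspace (prod_topology (top_of_set {0..1}) K)" "(f \<circ> snd) z = Some (i, x)" "i \<notin> N"
    then show "x \<in> B i" using SN by auto
  qed
  have hc: "continuous_map (prod_topology (top_of_set {0..1}) K) (mtopology_of W) h"
    by (rule continuous_map_eq[OF hc0]) (auto simp: h_def)
  have "homotopic_with (\<lambda>h. h k0 = None) K (mtopology_of W) f g"
    unfolding homotopic_with_def
  proof (intro exI conjI allI ballI)
    show "continuous_map (prod_topology (top_of_set {0..1}) K) (mtopology_of W) h" by (rule hc)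
    fix k
    show "h (0,k) = f k" using Psi_0[OF fC] by (auto simp: h_def)
    show "h (1,k) = g k" by (auto simp: h_def g_def)
  next
    fix t :: real assume "t \<in> {0..1}"
    show "(\<lambda>k. h (t,k)) k0 = None" using k0 fk0 by (simp add: h_def)
  qed
  then show ?thesis using gT gk0 unfolding pointed_maps_def pointed_homotopic_def by blast
qed

lemma inj_lemma:
  assumes K: "compact_space K" and k0: "k0 \<in> topspace K"
    and f: "f \<in> pointed_maps K k0 T None" and g: "g \<in> pointed_maps K k0 T None"
    and hm: "pointed_homotopic K k0 (mtopology_of W) None f g"
  shows "pointed_homotopic K k0 T None f g"
proof -
  let ?IK = "prod_topology (top_of_set {0..1::real}) K"
  obtain H where Hc: "continuous_map ?IK (mtopology_of W) H" and H0: "\<And>k. H (0,k) = f k"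
    and H1: "\<And>k. H (1,k) = g k" and Hp: "\<And>t. t \<in> {0..1} \<Longrightarrow> H (t,k0) = None"
    using hm unfolding pointed_homotopic_def homotopic_with_def by auto
  have fT: "continuous_map K T f" and gT: "continuous_map K T g"
    using f g by (auto simp: pointed_maps_def)
  have "compact_space (top_of_set {0..1::real})"
    by (simp add: compact_space_subtopology)
  then have cIK: "compact_space ?IK" using K by (simp add: compact_space_prod_topology)
  have cpt: "compactin (mtopology_of W) (H ` topspace ?IK)"
    using image_compactin[OF cIK[unfolded compact_space_def] Hc] .
  define NH where "NH = {i. \<exists>x. Some (i,x) \<in> H ` topspace ?IK \<and> x \<notin> B i}"
  define Nf where "Nf = {i. \<exists>x. Some (i,x) \<in> f ` topspace K}"
  define Ng where "Ng = {i. \<exists>x. Some (i,x) \<in> g ` topspace K}"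
  define N where "N = NH \<union> Nf \<union> Ng"
  have "finite NH" unfolding NH_def using far_finite[OF cpt r] .
  moreover have "finite Nf" unfolding Nf_def
    using T_compact_finite[OF image_compactin[OF K[unfolded compact_space_def] fT]] .
  moreover have "finite Ng" unfolding Ng_def
    using T_compact_finite[OF image_compactin[OF K[unfolded compact_space_def] gT]] .
  ultimately have N: "finite N" unfolding N_def by simp
  have HC: "\<And>z. z \<in> topspace ?IK \<Longrightarrow> H z \<in> CC"
    using continuous_map_funspace[OF Hc] by (auto simp: Pi_iff)
  have SN: "x \<in> B i" if "z \<in> topspace ?IK" "H z = Some (i,x)" "i \<notin> N" for z i x
  proof (rule ccontr)
    assume "x \<notin> B i"
    moreover have "Some (i,x) \<in> H ` topspace ?IK" using that(1,2) by (intro image_eqI[where x=z]) auto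
    ultimately have "i \<in> NH" unfolding NH_def by blast
    then show False using that(3) N_def by blast
  qed
  have c1: "continuous_map ?IK (top_of_set {0..1}) (\<lambda>k. 1::real)" by simp
  have PW: "continuous_map ?IK (mtopology_of W) (\<lambda>z. Psi N 1 (H z))"
    using Psi_cont[OF Hc c1 SN] by simp
  have PT: "continuous_map ?IK T (\<lambda>z. Psi N 1 (H z))"
  proof (rule cont_to_T[OF PW N])
    fix z i x assume z: "z \<in> topspace ?IK" and e: "Psi N 1 (H z) = Some (i,x)"
    show "i \<in> N"
    proof (rule Psi_1N[where p="H z"])
      show "H z \<in> CC" by (rule HC[OF z])
      show "\<And>i x. H z = Some (i,x) \<Longrightarrow> i \<notin> N \<Longrightarrow> x \<in> B i" by (rule SN[OF z])
      show "Psi N 1 (H z) = Some (i,x)" by (rule e)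
    qed
  qed
  have fN: "\<forall>i x. f k = Some (i,x) \<longrightarrow> i \<in> N" if "k \<in> topspace K" for k
  proof (intro allI impI)
    fix i x assume "f k = Some (i,x)"
    then have "Some (i,x) \<in> f ` topspace K" using that by (intro image_eqI[where x=k]) auto
    then show "i \<in> N" unfolding N_def Nf_def by blast
  qed
  have gN: "\<forall>i x. g k = Some (i,x) \<longrightarrow> i \<in> N" if "k \<in> topspace K" for k
  proof (intro allI impI)
    fix i x assume "g k = Some (i,x)"
    then have "Some (i,x) \<in> g ` topspace K" using that by (intro image_eqI[where x=k]) auto
    then show "i \<in> N" unfolding N_def Ng_def by blast
  qed
  define H' where "H' = (\<lambda>(t,k). if k \<in> topspace K then Psi N 1 (H (t,k)) else if t = 0 then f k else g k)"
  have H'c: "continuous_map ?IK T H'"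
    by (rule continuous_map_eq[OF PT]) (auto simp: H'_def)
  have "homotopic_with (\<lambda>h. h k0 = None) K T f g"
    unfolding homotopic_with_def
  proof (intro exI conjI allI ballI)
    show "continuous_map ?IK T H'" by (rule H'c)
    fix k
    show "H' (0,k) = f k" using Psi_fixN[OF fN] by (auto simp: H'_def H0)
    show "H' (1,k) = g k" using Psi_fixN[OF gN] by (auto simp: H'_def H1)
  next
    fix t :: real assume "t \<in> {0..1}"
    then show "(\<lambda>k. H' (t,k)) k0 = None" using k0 Hp by (simp add: H'_def)
  qed
  then show ?thesis unfolding pointed_homotopic_def .
qed

lemma classes_bij:
  assumes K: "compact_space K" and k0: "k0 \<in> topspace K"
  shows "bij_betw (induced_on_classes K k0 (mtopology_of W) None id)
           (pointed_homotopy_classes K k0 T None)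
           (pointed_homotopy_classes K k0 (mtopology_of W) None)"
proof -
  define Ps where "Ps = pointed_maps K k0 T None"
  define Pm where "Pm = pointed_maps K k0 (mtopology_of W) None"
  define hs where "hs = pointed_homotopic K k0 T None"
  define hm where "hm = pointed_homotopic K k0 (mtopology_of W) None"
  define Rs where "Rs = {(f, g). f \<in> Ps \<and> g \<in> Ps \<and> hs f g}"
  define Rm where "Rm = {(f, g). f \<in> Pm \<and> g \<in> Pm \<and> hm f g}"
  define F where "F = induced_on_classes K k0 (mtopology_of W) None id"
  have PsPm: "f \<in> Pm" if "f \<in> Ps" for f
  proof -
    have "continuous_map K T f" "f k0 = None" using that by (auto simp: Ps_def pointed_maps_def)
    then show ?thesis using continuous_map_compose[OF _ cont_id, of K f] by (simp add: Pm_def pointed_maps_def)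
  qed
  have hs_hm: "hm f g" if "hs f g" for f g
  proof -
    have "homotopic_with (\<lambda>h. h k0 = None) K (mtopology_of W) (id \<circ> f) (id \<circ> g)"
      using homotopic_with_compose_continuous_map_left[OF that[unfolded hs_def pointed_homotopic_def] cont_id] by simp
    then show ?thesis by (simp add: hm_def pointed_homotopic_def)
  qed
  have hm_sym: "hm g f" if "hm f g" for f g
    using that homotopic_with_symD unfolding hm_def pointed_homotopic_def by blast
  have hm_trans: "hm f h" if "hm f g" "hm g h" for f g h
    using that homotopic_with_trans unfolding hm_def pointed_homotopic_def by blast
  have hs_sym: "hs g f" if "hs f g" for f g
    using that homotopic_with_symD unfolding hs_def pointed_homotopic_def by blast
  have hs_trans: "hs f h" if "hs f g" "hs g h" for f g h
    using that homotopic_with_trans unfolding hs_def pointed_homotopic_def by blast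
  have hm_refl: "hm f f" if "f \<in> Pm" for f
    using that unfolding hm_def pointed_homotopic_def Pm_def pointed_maps_def by simp
  have hs_refl: "hs f f" if "f \<in> Ps" for f
    using that unfolding hs_def pointed_homotopic_def Ps_def pointed_maps_def by simp
  have clsS: "Rs `` {f} = {g. g \<in> Ps \<and> hs f g}" if "f \<in> Ps" for f
    using that unfolding Rs_def by auto
  have clsM: "Rm `` {f} = {g. g \<in> Pm \<and> hm f g}" if "f \<in> Pm" for f
    using that unfolding Rm_def by auto
  have Fcls: "F (Rs `` {f}) = Rm `` {f}" if f: "f \<in> Ps" for f
  proof -
    have "F (Rs `` {f}) = {g \<in> Pm. \<exists>f'\<in>Rs `` {f}. hm (id \<circ> f') g}"
      unfolding F_def induced_on_classes_def Pm_def hm_def ..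
    also have "\<dots> = {g. g \<in> Pm \<and> hm f g}"
    proof (intro set_eqI iffI)
      fix g assume "g \<in> {g \<in> Pm. \<exists>f'\<in>Rs `` {f}. hm (id \<circ> f') g}"
      then obtain f' where "g \<in> Pm" "f' \<in> Ps" "hs f f'" "hm f' g" using clsS[OF f] by auto
      then show "g \<in> {g. g \<in> Pm \<and> hm f g}" using hs_hm hm_trans by blast
    next
      fix g assume "g \<in> {g. g \<in> Pm \<and> hm f g}"
      moreover have "f \<in> Rs `` {f}" using clsS[OF f] f hs_refl by auto
      ultimately show "g \<in> {g \<in> Pm. \<exists>f'\<in>Rs `` {f}. hm (id \<circ> f') g}" by auto
    qed
    also have "\<dots> = Rm `` {f}" using clsM PsPm[OF f] by simp
    finally show ?thesis .
  qed
  have qS: "pointed_homotopy_classes K k0 T None = Ps // Rs"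
    unfolding pointed_homotopy_classes_def Ps_def Rs_def hs_def ..
  have qM: "pointed_homotopy_classes K k0 (mtopology_of W) None = Pm // Rm"
    unfolding pointed_homotopy_classes_def Pm_def Rm_def hm_def ..
  have "inj_on F (Ps // Rs)"
  proof (rule inj_onI)
    fix X Y assume X: "X \<in> Ps // Rs" and Y: "Y \<in> Ps // Rs" and eq: "F X = F Y"
    obtain f1 where f1: "f1 \<in> Ps" "X = Rs `` {f1}" using X by (auto elim: quotientE)
    obtain f2 where f2: "f2 \<in> Ps" "Y = Rs `` {f2}" using Y by (auto elim: quotientE)
    have "Rm `` {f1} = Rm `` {f2}" using eq f1 f2 Fcls by simp
    moreover have "f2 \<in> Rm `` {f2}" using clsM PsPm[OF f2(1)] hm_refl by auto
    ultimately have "hm f1 f2" using clsM PsPm[OF f1(1)] by auto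
    then have h12: "hs f1 f2"
      using inj_lemma[OF K k0] f1(1) f2(1) unfolding hm_def hs_def Ps_def by blast
    show "X = Y"
      unfolding f1(2) f2(2) clsS[OF f1(1)] clsS[OF f2(1)]
      using h12 hs_sym hs_trans by blast
  qed
  moreover have "F ` (Ps // Rs) = Pm // Rm"
  proof
    show "F ` (Ps // Rs) \<subseteq> Pm // Rm"
    proof
      fix Y assume "Y \<in> F ` (Ps // Rs)"
      then obtain f where f: "f \<in> Ps" "Y = F (Rs `` {f})" by (auto elim: quotientE)
      then have "Y = Rm `` {f}" using Fcls by simp
      then show "Y \<in> Pm // Rm" using PsPm[OF f(1)] by (auto intro: quotientI)
    qed
  next
    show "Pm // Rm \<subseteq> F ` (Ps // Rs)"
    proof
      fix Y assume "Y \<in> Pm // Rm"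
      then obtain h where h: "h \<in> Pm" "Y = Rm `` {h}" by (auto elim: quotientE)
      obtain g where g: "g \<in> Ps" "hm h g"
        using surj_lemma[OF K k0 h(1)[unfolded Pm_def]] unfolding Ps_def hm_def by blast
      have "Rm `` {h} = Rm `` {g}"
        unfolding clsM[OF h(1)] clsM[OF PsPm[OF g(1)]] using g(2) hm_sym hm_trans by blast
      then have "Y = F (Rs `` {g})" using h(2) Fcls[OF g(1)] by simp
      moreover have "Rs `` {g} \<in> Ps // Rs" using g(1) by (rule quotientI)
      ultimately show "Y \<in> F ` (Ps // Rs)" by blast
    qed
  qed
  ultimately show ?thesis unfolding bij_betw_def F_def[symmetric] qS qM by blast
qed

end

theorem mainTheorem7:
  fixes m :: "nat \<Rightarrow> 'a metric" and x0 :: "nat \<Rightarrow> 'a" and r :: real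
    and K :: "'b topology" and k0 :: 'b
  assumes "r > 0"
    and "\<And>i. x0 i \<in> mspace (m i)"
    and "\<And>i. \<exists>R. strong_deformation_contraction (submetric (m i) (mball_of (m i) (x0 i) r)) (x0 i) R"
    and "compact_space K" and "k0 \<in> topspace K"
  shows "bij_betw id (topspace (weak_wedge m x0)) (mspace (metric_wedge m x0)) \<and>
         continuous_map (weak_wedge m x0) (mtopology_of (metric_wedge m x0)) id \<and>
         bij_betw (induced_on_classes K k0 (mtopology_of (metric_wedge m x0)) None id)
           (pointed_homotopy_classes K k0 (weak_wedge m x0) None)
           (pointed_homotopy_classes K k0 (mtopology_of (metric_wedge m x0)) None)"
proof -
  have "\<forall>i. \<exists>R. strong_deformation_contraction (submetric (m i) (mball_of (m i) (x0 i) r)) (x0 i) R"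
    using assms(3) by blast
  then obtain R where R: "\<forall>i. strong_deformation_contraction (submetric (m i) (mball_of (m i) (x0 i) r)) (x0 i) (R i)"
    by (rule choice[THEN exE])
  interpret WWR m x0 r R
    using assms(1,2) R by unfold_locales auto
  show ?thesis
    using cont_id classes_bij[OF assms(4,5)] by (simp add: bij_betw_def)
qed

end
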